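(* Let $n\geq 3$, $m\geq 2$ and $k\geq 1$. The group $B_n/[B_n[m], B_n[m]](mk+1)$ is finite and isomorphic to the cyclic group $\mathbb{Z}_{mk+1}$.
   Context: $B_n$ is the braid group on $n$ strands with standard generators $\sigma_1,\dots,\sigma_{n-1}$. For $m\ge 2$, the level $m$ congruence subgroup $B_n[m]$ is the kernel of the mod $m$ reduction $\rho_m$ of the symplectic representation of $B_n$ obtained by specializing the (reducible) Burau representation at $t=-1$. $[B_n[m],B_n[m]]$ denotes its commutator subgroup. For positive integers $n,m,p$, $B_n/[B_n[m], B_n[m]](p)$ denotes the Coxeter-type quotient of $B_n/[B_n[m], B_n[m]]$ obtained by adding the relations $\sigma_i^p=1$ for all $1\le i\le n-1$, i.e. the quotient of $B_n$ by the normal subgroup generated by $[B_n[m],B_n[m]]$ and $\sigma_1^p$. *)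

theory Defs
  imports "HOL-Algebra.Algebra" "HOL-Number_Theory.Cong"
begin

text \<open>Braid words: a letter (i, b) stands for sigma_i if b = False and for
  sigma_i inverse if b = True.  Valid letters for B_n have 1 <= i <= n-1.\<close>

type_synonym bword = "(nat \<times> bool) list"

definition valid_bword :: "nat \<Rightarrow> bword \<Rightarrow> bool" where
  "valid_bword n w \<longleftrightarrow> (\<forall>x \<in> set w. 1 \<le> fst x \<and> fst x \<le> n - 1)"

definition inv_bword :: "bword \<Rightarrow> bword" where
  "inv_bword w = rev (map (\<lambda>(i, b). (i, \<not> b)) w)"

definition comm_bword :: "bword \<Rightarrow> bword \<Rightarrow> bword" where
  "comm_bword u v = u @ v @ inv_bword u @ inv_bword v"

text \<open>n x n integer matrices as functions (indices 0..n-1).  Unreduced (reducible)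
  Burau representation at t = -1: sigma_i acts by the block [[1-t, t],[1, 0]] =
  [[2,-1],[1,0]] in rows/columns i-1, i (0-based); its inverse is [[0,1],[-1,2]].\<close>

definition burau_gen :: "nat \<Rightarrow> bool \<Rightarrow> nat \<Rightarrow> nat \<Rightarrow> int" where
  "burau_gen i b r c =
     (if r = i - 1 \<and> c = i - 1 then (if b then 0 else 2)
      else if r = i - 1 \<and> c = i then (if b then 1 else -1)
      else if r = i \<and> c = i - 1 then (if b then -1 else 1)
      else if r = i \<and> c = i then (if b then 2 else 0)
      else if r = c then 1 else 0)"

definition mat_id :: "nat \<Rightarrow> nat \<Rightarrow> int" where
  "mat_id r c = (if r = c then 1 else 0)"

definition mat_mult :: "nat \<Rightarrow> (nat \<Rightarrow> nat \<Rightarrow> int) \<Rightarrow> (nat \<Rightarrow> nat \<Rightarrow> int) \<Rightarrow> nat \<Rightarrow> nat \<Rightarrow> int" where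
  "mat_mult n A B r c = (\<Sum>j<n. A r j * B j c)"

definition burau_word :: "nat \<Rightarrow> bword \<Rightarrow> nat \<Rightarrow> nat \<Rightarrow> int" where
  "burau_word n w = foldr (\<lambda>(i, b) M. mat_mult n (burau_gen i b) M) w mat_id"

text \<open>A word represents an element of the level m congruence subgroup B_n[m]
  iff its Burau matrix at t = -1 is congruent to the identity mod m.\<close>

definition in_level_kernel :: "nat \<Rightarrow> nat \<Rightarrow> bword \<Rightarrow> bool" where
  "in_level_kernel n m w \<longleftrightarrow>
     (\<forall>r < n. \<forall>c < n. [burau_word n w r c = mat_id r c] (mod int m))"

text \<open>The congruence on valid words whose classes are the elements of
  B_n / <<[B_n[m],B_n[m]], sigma_1^p>>: free reduction, braid relations,
  commutators of congruence-subgroup elements, and sigma_1^p.\<close>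

inductive braid_rel :: "nat \<Rightarrow> nat \<Rightarrow> nat \<Rightarrow> bword \<Rightarrow> bword \<Rightarrow> bool"
  for n m p where
  refl: "valid_bword n w \<Longrightarrow> braid_rel n m p w w"
| sym: "braid_rel n m p u v \<Longrightarrow> braid_rel n m p v u"
| trans: "braid_rel n m p u v \<Longrightarrow> braid_rel n m p v w \<Longrightarrow> braid_rel n m p u w"
| ctx: "braid_rel n m p u v \<Longrightarrow> valid_bword n a \<Longrightarrow> valid_bword n b \<Longrightarrow>
        braid_rel n m p (a @ u @ b) (a @ v @ b)"
| cancel: "1 \<le> i \<Longrightarrow> i \<le> n - 1 \<Longrightarrow> braid_rel n m p [(i, b), (i, \<not> b)] []"
| braid3: "1 \<le> i \<Longrightarrow> i + 1 \<le> n - 1 \<Longrightarrow>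
        braid_rel n m p [(i, False), (i + 1, False), (i, False)]
                        [(i + 1, False), (i, False), (i + 1, False)]"
| far: "1 \<le> i \<Longrightarrow> i + 2 \<le> j \<Longrightarrow> j \<le> n - 1 \<Longrightarrow>
        braid_rel n m p [(i, False), (j, False)] [(j, False), (i, False)]"
| comm: "valid_bword n u \<Longrightarrow> valid_bword n v \<Longrightarrow> in_level_kernel n m u \<Longrightarrow>
         in_level_kernel n m v \<Longrightarrow> braid_rel n m p (comm_bword u v) []"
| power: "1 \<le> n - 1 \<Longrightarrow> braid_rel n m p (replicate p (1, False)) []"

definition braid_quot_group :: "nat \<Rightarrow> nat \<Rightarrow> nat \<Rightarrow> bword set monoid" where
  "braid_quot_group n m p =
     \<lparr> carrier = {w. valid_bword n w} // {(u, v). braid_rel n m p u v},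
       monoid.mult = (\<lambda>A B. {w. \<exists>a \<in> A. \<exists>b \<in> B. braid_rel n m p (a @ b) w}),
       one = {w. braid_rel n m p [] w} \<rparr>"

end

theory Submission imports Defs begin

lemma valid_append[simp]: "valid_bword n (u @ v) \<longleftrightarrow> valid_bword n u \<and> valid_bword n v"
  by (auto simp: valid_bword_def)
lemma valid_Nil[simp]: "valid_bword n []" by (simp add: valid_bword_def)
lemma valid_Cons[simp]: "valid_bword n (x # w) \<longleftrightarrow> 1 \<le> fst x \<and> fst x \<le> n - 1 \<and> valid_bword n w"
  by (auto simp: valid_bword_def)
lemma valid_inv[simp]: "valid_bword n (inv_bword w) \<longleftrightarrow> valid_bword n w"
  by (auto simp: valid_bword_def inv_bword_def)
lemma valid_rep[simp]: "valid_bword n (replicate j x) \<longleftrightarrow> (j = 0 \<or> (1 \<le> fst x \<and> fst x \<le> n - 1))"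
  by (auto simp: valid_bword_def)

lemma rel_valid: "braid_rel n m p u v \<Longrightarrow> valid_bword n u \<and> valid_bword n v"
  by (induction rule: braid_rel.induct) (auto simp: comm_bword_def)

lemma rel_app: "braid_rel n m p u u' \<Longrightarrow> braid_rel n m p v v' \<Longrightarrow> braid_rel n m p (u @ v) (u' @ v')"
proof -
  assume 1: "braid_rel n m p u u'" and 2: "braid_rel n m p v v'"
  have "braid_rel n m p ([] @ u @ v) ([] @ u' @ v)"
    using rel_valid[OF 2] by (intro braid_rel.ctx[OF 1]) auto
  moreover have "braid_rel n m p (u' @ v @ []) (u' @ v' @ [])"
    using rel_valid[OF 1] by (intro braid_rel.ctx[OF 2]) auto
  ultimately show ?thesis by (auto intro: braid_rel.trans)
qed

lemma inv_Cons[simp]: "inv_bword ((i, b) # w) = inv_bword w @ [(i, \<not> b)]"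
  by (simp add: inv_bword_def)
lemma inv_Nil[simp]: "inv_bword [] = []"
  by (simp add: inv_bword_def)

lemma inv_cancel: "valid_bword n w \<Longrightarrow>
   braid_rel n m p (w @ inv_bword w) [] \<and> braid_rel n m p (inv_bword w @ w) []"
proof (induction w)
  case Nil
  then show ?case by (auto intro: braid_rel.refl)
next
  case (Cons x w)
  obtain i b where x: "x = (i, b)" by (cases x)
  have v: "valid_bword n w" "1 \<le> i" "i \<le> n - 1" using Cons.prems x by auto
  have IH: "braid_rel n m p (w @ inv_bword w) []" "braid_rel n m p (inv_bword w @ w) []"
    using Cons.IH v by auto
  have "braid_rel n m p ([(i,b)] @ (w @ inv_bword w) @ [(i, \<not> b)]) ([(i,b)] @ [] @ [(i, \<not> b)])"
    using v by (intro braid_rel.ctx IH) auto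
  moreover have "braid_rel n m p [(i,b), (i, \<not> b)] []" using v by (intro braid_rel.cancel)
  ultimately have A: "braid_rel n m p (x # w @ inv_bword (x # w)) []"
    unfolding x by (auto intro: braid_rel.trans)
  have "braid_rel n m p (inv_bword w @ [(i, \<not> b), (i, b)] @ w) (inv_bword w @ [] @ w)"
    using v braid_rel.cancel[of i n m p "\<not> b"] by (intro braid_rel.ctx) auto
  then have "braid_rel n m p (inv_bword (x # w) @ x # w) (inv_bword w @ w)"
    unfolding x by simp
  with IH have B: "braid_rel n m p (inv_bword (x # w) @ x # w) []"
    by (auto intro: braid_rel.trans)
  from A B show ?case by simp
qed

lemma cancel_left: "valid_bword n a \<Longrightarrow> braid_rel n m p (a @ u) (a @ v) \<Longrightarrow> braid_rel n m p u v"
proof -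
  assume a: "valid_bword n a" and r: "braid_rel n m p (a @ u) (a @ v)"
  have vu: "valid_bword n u" "valid_bword n v" using rel_valid[OF r] by auto
  have c: "braid_rel n m p (inv_bword a @ a) []" using inv_cancel[OF a] by auto
  have "braid_rel n m p ((inv_bword a @ a) @ u) ([] @ u)"
    using rel_app[OF c braid_rel.refl[OF vu(1)]] .
  moreover have "braid_rel n m p (inv_bword a @ (a @ u)) (inv_bword a @ (a @ v))"
    using rel_app[OF braid_rel.refl r] a by auto
  moreover have "braid_rel n m p ((inv_bword a @ a) @ v) ([] @ v)"
    using rel_app[OF c braid_rel.refl[OF vu(2)]] .
  ultimately show ?thesis by (auto intro: braid_rel.trans braid_rel.sym)
qed

lemma cancel_right: "valid_bword n a \<Longrightarrow> braid_rel n m p (u @ a) (v @ a) \<Longrightarrow> braid_rel n m p u v"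
proof -
  assume a: "valid_bword n a" and r: "braid_rel n m p (u @ a) (v @ a)"
  have vu: "valid_bword n u" "valid_bword n v" using rel_valid[OF r] by auto
  have c: "braid_rel n m p (a @ inv_bword a) []" using inv_cancel[OF a] by auto
  have "braid_rel n m p (u @ (a @ inv_bword a)) (u @ [])"
    using rel_app[OF braid_rel.refl[OF vu(1)] c] .
  moreover have "braid_rel n m p ((u @ a) @ inv_bword a) ((v @ a) @ inv_bword a)"
    using rel_app[OF r braid_rel.refl] a by auto
  moreover have "braid_rel n m p (v @ (a @ inv_bword a)) (v @ [])"
    using rel_app[OF braid_rel.refl[OF vu(2)] c] .
  ultimately show ?thesis by (auto intro: braid_rel.trans braid_rel.sym)
qed


definition Nm :: "nat \<Rightarrow> nat \<Rightarrow> nat \<Rightarrow> int" where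
  "Nm i r c = (if r = i - 1 \<or> r = i then (if c = i - 1 then 1 else if c = i then -1 else 0) else 0)"

lemma burau_word_Cons: "burau_word n ((i, b) # w) = mat_mult n (burau_gen i b) (burau_word n w)"
  by (simp add: burau_word_def)

lemma burau_rep:
  assumes "1 \<le> i" "i < n" "r < n" "c < n"
  shows "burau_word n (replicate j (i, False)) r c = mat_id r c + int j * Nm i r c"
  using assms(3,4)
proof (induction j arbitrary: r c)
  case 0
  then show ?case by (simp add: burau_word_def)
next
  case (Suc j)
  let ?g = "\<lambda>x. burau_gen i False r x * (mat_id x c + int j * Nm i x c)"
  have "burau_word n (replicate (Suc j) (i, False)) r c = (\<Sum>x<n. ?g x)"
  proof -
    have "\<And>x. x < n \<Longrightarrow> burau_word n (replicate j (i, False)) x c = mat_id x c + int j * Nm i x c"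
      using Suc.prems by (intro Suc.IH) auto
    then show ?thesis
      unfolding replicate_Suc burau_word_Cons mat_mult_def
      by (intro sum.cong refl) auto
  qed
  also have "\<dots> = (\<Sum>x\<in>(if r = i - 1 \<or> r = i then {i - 1, i} else {r, i - 1, i}). ?g x)"
  proof (rule sum.mono_neutral_right)
    show "(if r = i - 1 \<or> r = i then {i - 1, i} else {r, i - 1, i}) \<subseteq> {..<n}" using assms Suc.prems by auto
    show "\<forall>x\<in>{..<n} - (if r = i - 1 \<or> r = i then {i - 1, i} else {r, i - 1, i}). ?g x = 0"
      by (auto simp: burau_gen_def)
  qed auto
  also have "\<dots> = mat_id r c + int (Suc j) * Nm i r c"
    using assms
    by (cases "r = i - 1"; cases "r = i"; cases "c = i - 1"; cases "c = i")
       (auto simp: burau_gen_def mat_id_def Nm_def algebra_simps)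
  finally show ?case .
qed

lemma kernel_rep:
  assumes "1 \<le> i" "i \<le> n - 1"
  shows "in_level_kernel n m (replicate m (i, False))"
  unfolding in_level_kernel_def
proof (intro allI impI)
  fix r c assume "r < n" "c < n"
  then have "burau_word n (replicate m (i, False)) r c = mat_id r c + int m * Nm i r c"
    using assms by (intro burau_rep) auto
  then show "[burau_word n (replicate m (i, False)) r c = mat_id r c] (mod int m)"
    by (simp add: cong_def)
qed


lemma rep_snoc: "replicate (Suc j) x = replicate j x @ [x]"
  by (simp add: replicate_append_same)

lemma comm_kernel:
  assumes vu: "valid_bword n u" and vv: "valid_bword n v"
    and ku: "in_level_kernel n m u" and kv: "in_level_kernel n m v"
  shows "braid_rel n m p (u @ v) (v @ u)"
proof -
  have c1: "braid_rel n m p (inv_bword v @ v) []" and c2: "braid_rel n m p (inv_bword u @ u) []"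
    using inv_cancel vu vv by auto
  have "braid_rel n m p (inv_bword u @ (inv_bword v @ v) @ u) (inv_bword u @ [] @ u)"
    using vu by (intro braid_rel.ctx c1) auto
  then have "braid_rel n m p (inv_bword u @ inv_bword v @ v @ u) []"
    using c2 by (auto intro: braid_rel.trans)
  then have A: "braid_rel n m p ((u @ v) @ (inv_bword u @ inv_bword v @ v @ u)) ((u @ v) @ [])"
    using vu vv by (intro rel_app braid_rel.refl) auto
  have B: "braid_rel n m p (comm_bword u v @ (v @ u)) ([] @ (v @ u))"
    using vu vv by (intro rel_app braid_rel.refl braid_rel.comm ku kv) auto
  have E: "(u @ v) @ (inv_bword u @ inv_bword v @ v @ u) = comm_bword u v @ (v @ u)"
    by (simp add: comm_bword_def)
  have A': "braid_rel n m p (comm_bword u v @ (v @ u)) (u @ v)" using A unfolding E by simp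
  from A' B show ?thesis by (metis braid_rel.sym braid_rel.trans append_Nil)
qed

lemma comm_pow:
  assumes vu: "valid_bword n u" and vw: "valid_bword n w"
    and c: "braid_rel n m p (u @ w) (w @ u)"
  shows "braid_rel n m p (concat (replicate j u) @ w) (w @ concat (replicate j u))"
proof (induction j)
  case 0
  then show ?case using vw by (auto intro: braid_rel.refl)
next
  case (Suc j)
  let ?U = "concat (replicate j u)"
  have vU: "valid_bword n ?U" using vu by (induction j) auto
  have "braid_rel n m p (u @ (?U @ w) @ []) (u @ (w @ ?U) @ [])"
    using vu by (intro braid_rel.ctx Suc.IH) auto
  moreover have "braid_rel n m p ([] @ (u @ w) @ ?U) ([] @ (w @ u) @ ?U)"
    using vU by (intro braid_rel.ctx c) auto
  ultimately show ?case by (auto intro: braid_rel.trans)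
qed

lemma concat_rep: "concat (replicate k (replicate m x)) = replicate (m * k) x"
  by (induction k) (auto simp: replicate_add)

lemma pair_comm:
  assumes n: "1 \<le> i" "i \<le> n - 1" "1 \<le> j" "j \<le> n - 1"
    and pa: "braid_rel n m (m * k + 1) (replicate (m * k + 1) (i, False)) []"
    and pb: "braid_rel n m (m * k + 1) (replicate (m * k + 1) (j, False)) []"
  shows "braid_rel n m (m * k + 1) [(i, False), (j, False)] [(j, False), (i, False)]"
proof -
  let ?R = "braid_rel n m (m * k + 1)"
  let ?a = "(i, False)" and ?b = "(j, False)"
  let ?X = "replicate (m * k) ?a" and ?Y = "replicate (m * k) ?b"
  have UV: "?R (replicate m ?a @ replicate m ?b) (replicate m ?b @ replicate m ?a)"
    using n by (intro comm_kernel kernel_rep) auto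
  have "?R (?X @ replicate m ?b) (replicate m ?b @ ?X)"
    using comm_pow[OF _ _ UV, of k] n by (simp add: concat_rep)
  then have "?R (replicate m ?b @ ?X) (?X @ replicate m ?b)" by (rule braid_rel.sym)
  then have "?R (?Y @ ?X) (?X @ ?Y)"
    using comm_pow[of n "replicate m ?b" ?X, of m "m * k + 1" k] n by (simp add: concat_rep)
  then have h2: "?R ([] @ (?Y @ ?X) @ [?b, ?a]) ([] @ (?X @ ?Y) @ [?b, ?a])"
    using n by (intro braid_rel.ctx) auto
  have c3: "?R (?X @ replicate (m * k + 1) ?b @ [?a]) (?X @ [] @ [?a])"
    using n by (intro braid_rel.ctx pb) auto
  have e1: "?X @ replicate (m * k + 1) ?b @ [?a] = ?X @ ?Y @ [?b, ?a]"
    by (simp add: replicate_append_same)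
  have e2: "?X @ [] @ [?a] = replicate (m * k + 1) ?a"
    by (simp add: replicate_append_same)
  have h3: "?R (?X @ ?Y @ [?b, ?a]) (replicate (m * k + 1) ?a)"
    using c3 unfolding e1 e2 .
  have "?R (?Y @ ?X @ [?b, ?a]) []"
    using h2 h3 pa by (auto intro: braid_rel.trans)
  then have h4: "?R ([?a, ?b] @ (?Y @ ?X @ [?b, ?a])) ([?a, ?b] @ [])"
    using n by (intro rel_app braid_rel.refl) auto
  have c5: "?R ([?a] @ replicate (m * k + 1) ?b @ (?X @ [?b, ?a])) ([?a] @ [] @ (?X @ [?b, ?a]))"
    using n by (intro braid_rel.ctx pb) auto
  have c6: "?R ([] @ replicate (m * k + 1) ?a @ [?b, ?a]) ([] @ [] @ [?b, ?a])"
    using n by (intro braid_rel.ctx pa) auto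
  have e3: "[?a] @ replicate (m * k + 1) ?b @ (?X @ [?b, ?a]) = [?a, ?b] @ (?Y @ ?X @ [?b, ?a])"
    by (simp add: replicate_append_same)
  have e4: "[?a] @ [] @ (?X @ [?b, ?a]) = [] @ replicate (m * k + 1) ?a @ [?b, ?a]"
    by (simp add: replicate_append_same)
  have e5: "([] @ [] @ [?b, ?a]) = [?b, ?a]" by simp
  have h5: "?R ([?a, ?b] @ (?Y @ ?X @ [?b, ?a])) [?b, ?a]"
    using c5 c6 unfolding e3 e4 e5 by (rule braid_rel.trans)
  have e6: "[?a, ?b] @ [] = [?a, ?b]" by simp
  from h4 h5 show ?thesis unfolding e6 by (meson braid_rel.trans braid_rel.sym)
qed


lemma conj_rep:
  assumes "1 \<le> i" "i + 1 \<le> n - 1"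
  shows "braid_rel n m p ([(i, False), (i + 1, False)] @ replicate j (i, False))
                         (replicate j (i + 1, False) @ [(i, False), (i + 1, False)])"
proof (induction j)
  case 0
  then show ?case using assms by (auto intro: braid_rel.refl)
next
  case (Suc j)
  let ?c = "[(i, False), (i + 1, False)]"
  have b: "braid_rel n m p (?c @ [(i, False)]) ([(i + 1, False)] @ ?c)"
    using braid_rel.braid3[OF assms] by simp
  have A: "braid_rel n m p ([] @ (?c @ [(i, False)]) @ replicate j (i, False))
                        ([] @ ([(i + 1, False)] @ ?c) @ replicate j (i, False))"
    using assms by (intro braid_rel.ctx b) auto
  have B: "braid_rel n m p ([(i + 1, False)] @ (?c @ replicate j (i, False)) @ [])
       ([(i + 1, False)] @ (replicate j (i + 1, False) @ ?c) @ [])"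
    using assms by (intro braid_rel.ctx Suc.IH) auto
  have e1: "[] @ (?c @ [(i, False)]) @ replicate j (i, False) = ?c @ replicate (Suc j) (i, False)"
    by simp
  have e2: "[] @ ([(i + 1, False)] @ ?c) @ replicate j (i, False) = [(i + 1, False)] @ (?c @ replicate j (i, False)) @ []"
    by simp
  have e3: "[(i + 1, False)] @ (replicate j (i + 1, False) @ ?c) @ [] = replicate (Suc j) (i + 1, False) @ ?c"
    by simp
  show ?case using A B unfolding e1 e2 e3 by (rule braid_rel.trans)
qed

lemma pow_next:
  assumes "1 \<le> i" "i + 1 \<le> n - 1"
    and "braid_rel n m p (replicate p (i, False)) []"
  shows "braid_rel n m p (replicate p (i + 1, False)) []"
proof -
  let ?c = "[(i, False), (i + 1, False)]"
  have "braid_rel n m p (?c @ replicate p (i, False)) (?c @ [])"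
    using assms by (intro rel_app braid_rel.refl) auto
  then have "braid_rel n m p (replicate p (i + 1, False) @ ?c) ?c"
    using braid_rel.trans[OF braid_rel.sym[OF conj_rep[OF assms(1,2), of m p p]]] by simp
  then have "braid_rel n m p (replicate p (i + 1, False) @ ?c) ([] @ ?c)" by simp
  then show ?thesis
    by (rule cancel_right[rotated]) (use assms in auto)
qed

lemma adj_eq:
  assumes "1 \<le> i" "i + 1 \<le> n - 1"
    and pa: "braid_rel n m (m * k + 1) (replicate (m * k + 1) (i, False)) []"
  shows "braid_rel n m (m * k + 1) [(i, False)] [(i + 1, False)]"
    and "braid_rel n m (m * k + 1) (replicate (m * k + 1) (i + 1, False)) []"
proof -
  let ?R = "braid_rel n m (m * k + 1)"
  let ?a = "(i, False)" and ?b = "(i + 1, False)"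
  show pb: "?R (replicate (m * k + 1) ?b) []"
    using pow_next assms by blast
  have ab: "?R [?a, ?b] [?b, ?a]"
    using assms pb by (intro pair_comm) auto
  have br: "?R [?a, ?b, ?a] [?b, ?a, ?b]"
    using braid_rel.braid3 assms by blast
  have "?R ([?a] @ [?a, ?b] @ []) ([?a] @ [?b, ?a] @ [])"
    using assms by (intro braid_rel.ctx ab) auto
  moreover have "?R ([] @ [?b, ?a] @ [?b]) ([] @ [?a, ?b] @ [?b])"
    using assms by (intro braid_rel.ctx braid_rel.sym[OF ab]) auto
  ultimately have "?R ([?a] @ [?a, ?b]) ([?a] @ [?b, ?b])"
    using br by (simp del: One_nat_def) (meson braid_rel.trans)
  then have "?R [?a, ?b] [?b, ?b]"
    by (rule cancel_left[rotated]) (use assms in auto)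
  then have "?R ([?a] @ [?b]) ([?b] @ [?b])" by simp
  then show "?R [?a] [?b]"
    by (rule cancel_right[rotated]) (use assms in auto)
qed

lemma all_gens:
  assumes "2 \<le> n"
  shows "1 \<le> i \<Longrightarrow> i \<le> n - 1 \<Longrightarrow>
     braid_rel n m (m * k + 1) [(i, False)] [(1, False)] \<and>
     braid_rel n m (m * k + 1) (replicate (m * k + 1) (i, False)) []"
proof (induction i)
  case 0
  then show ?case by simp
next
  case (Suc i)
  show ?case
  proof (cases "i = 0")
    case True
    have "braid_rel n m (m * k + 1) (replicate (m * k + 1) (1, False)) []"
      using assms by (intro braid_rel.power) auto
    moreover have "braid_rel n m (m * k + 1) [(1, False)] [(1, False)]"
      using assms by (intro braid_rel.refl) auto
    ultimately show ?thesis using True by simp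
  next
    case False
    then have IH: "braid_rel n m (m * k + 1) [(i, False)] [(1, False)]"
        "braid_rel n m (m * k + 1) (replicate (m * k + 1) (i, False)) []"
      using Suc by auto
    have "braid_rel n m (m * k + 1) [(i, False)] [(i + 1, False)]"
         "braid_rel n m (m * k + 1) (replicate (m * k + 1) (i + 1, False)) []"
      using adj_eq[OF _ _ IH(2)] False Suc.prems by auto
    then show ?thesis using IH Suc_eq_plus1 braid_rel.trans braid_rel.sym by metis
  qed
qed


lemma rep_cong:
  assumes "braid_rel n m p [x] [y]"
  shows "braid_rel n m p (replicate j x) (replicate j y)"
proof (induction j)
  case 0
  then show ?case by (auto intro: braid_rel.refl)
next
  case (Suc j)
  have "braid_rel n m p ([x] @ replicate j x) ([y] @ replicate j y)"
    using assms Suc.IH by (rule rel_app)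
  then show ?case by simp
qed

lemma letter_rel:
  assumes n: "2 \<le> n" "1 \<le> i" "i \<le> n - 1"
  shows "braid_rel n m (m * k + 1) [(i, b)] (replicate (if b then m * k else 1) (1, False))"
proof (cases b)
  case False
  then show ?thesis using all_gens[OF n] by simp
next
  case True
  let ?R = "braid_rel n m (m * k + 1)"
  have g: "?R [(i, False)] [(1, False)]" "?R (replicate (m * k + 1) (i, False)) []"
    using all_gens[OF n] by auto
  have c1: "?R ([(i, True)] @ replicate (m * k + 1) (i, False) @ []) ([(i, True)] @ [] @ [])"
    using n by (intro braid_rel.ctx g(2)) auto
  have "?R [(i, True), (i, \<not> True)] []" using n by (intro braid_rel.cancel) auto
  then have c2: "?R ([] @ [(i, True), (i, False)] @ replicate (m * k) (i, False)) ([] @ [] @ replicate (m * k) (i, False))"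
    using n by (intro braid_rel.ctx) auto
  have e: "[(i, True)] @ replicate (m * k + 1) (i, False) @ [] = [] @ [(i, True), (i, False)] @ replicate (m * k) (i, False)"
    by simp
  have "?R [(i, True)] (replicate (m * k) (i, False))"
    using braid_rel.trans[OF braid_rel.sym[OF c1[unfolded e]] c2] by simp
  then show ?thesis using True rep_cong[OF g(1)] braid_rel.trans by auto
qed

definition cnt :: "nat \<Rightarrow> bword \<Rightarrow> nat" where
  "cnt q w = sum_list (map (\<lambda>x. if snd x then q else 1) w)"

definition esum :: "bword \<Rightarrow> int" where
  "esum w = sum_list (map (\<lambda>x. if snd x then -1 else 1) w)"

lemma esum_simps[simp]: "esum [] = 0" "esum (x # w) = (if snd x then -1 else 1) + esum w"
  "esum (u @ v) = esum u + esum v"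
  by (auto simp: esum_def)

lemma esum_inv[simp]: "esum (inv_bword w) = - esum w"
  by (induction w) (auto simp: esum_def inv_bword_def)

lemma esum_rep[simp]: "esum (replicate j (i, False)) = int j"
  by (induction j) auto

lemma word_rel:
  assumes n: "2 \<le> n" and v: "valid_bword n w"
  shows "braid_rel n m (m * k + 1) w (replicate (cnt (m * k) w) (1, False))"
  using v
proof (induction w)
  case Nil
  then show ?case by (auto simp: cnt_def intro: braid_rel.refl)
next
  case (Cons x w)
  obtain i b where x: "x = (i, b)" by (cases x)
  have "braid_rel n m (m * k + 1) ([(i, b)] @ w)
     (replicate (if b then m * k else 1) (1, False) @ replicate (cnt (m * k) w) (1, False))"
    using Cons x n by (intro rel_app letter_rel) auto
  then show ?case using x by (simp add: cnt_def replicate_add)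
qed

lemma rep_mult:
  assumes n: "2 \<le> n"
  shows "braid_rel n m (m * k + 1) (replicate ((m * k + 1) * q) (1, False)) []"
proof (induction q)
  case 0
  then show ?case by (auto intro: braid_rel.refl)
next
  case (Suc q)
  have "braid_rel n m (m * k + 1) (replicate (m * k + 1) (1, False) @ replicate ((m * k + 1) * q) (1, False)) ([] @ [])"
    using n Suc.IH by (intro rel_app braid_rel.power) auto
  moreover have "(m * k + 1) * Suc q = (m * k + 1) + (m * k + 1) * q" by simp
  ultimately show ?case by (simp only: replicate_add) simp
qed

lemma rep_mod:
  assumes n: "2 \<le> n"
  shows "braid_rel n m (m * k + 1) (replicate N (1, False)) (replicate (N mod (m * k + 1)) (1, False))"
proof -
  have e: "N = N mod (m * k + 1) + (m * k + 1) * (N div (m * k + 1))" by (metis mod_mult_div_eq add.commute)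
  have "braid_rel n m (m * k + 1) (replicate (N mod (m * k + 1)) (1, False) @ replicate ((m * k + 1) * (N div (m * k + 1))) (1, False))
     (replicate (N mod (m * k + 1)) (1, False) @ [])"
    using n by (intro rel_app rep_mult braid_rel.refl) auto
  then have "braid_rel n m (m * k + 1) (replicate (N mod (m * k + 1) + (m * k + 1) * (N div (m * k + 1))) (1, False))
     (replicate (N mod (m * k + 1)) (1, False))"
    by (simp only: replicate_add) simp
  then show ?thesis using e by metis
qed

lemma esum_cong: "braid_rel n m p u v \<Longrightarrow> [esum u = esum v] (mod int p)"
proof (induction rule: braid_rel.induct)
  case (sym u v) then show ?case by (metis cong_sym)
next
  case (trans u v w) then show ?case by (metis cong_trans)
next
  case (ctx u v a b) then show ?case by (simp add: cong_add cong_add_lcancel)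
next
  case (comm u v) then show ?case by (simp add: comm_bword_def)
next
  case power then show ?case by (simp add: cong_def)
qed auto

lemma cnt_esum: "[int (cnt (m * k) w) = esum w] (mod int (m * k + 1))"
proof (induction w)
  case Nil
  then show ?case by (simp add: cnt_def)
next
  case (Cons x w)
  have l: "[int (if snd x then m * k else 1) = (if snd x then -1 else 1)] (mod int (m * k + 1))"
    by (auto simp: cong_iff_dvd_diff add.commute)
  have "[int (if snd x then m * k else 1) + int (cnt (m * k) w) = (if snd x then -1 else 1) + esum w] (mod int (m * k + 1))"
    using l Cons.IH by (rule cong_add)
  then show ?case by (simp add: cnt_def)
qed

lemma canonical:
  assumes n: "2 \<le> n" and v: "valid_bword n w"
  shows "braid_rel n m (m * k + 1) w (replicate (nat (esum w mod int (m * k + 1))) (1, False))"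
proof -
  have "int (cnt (m * k) w mod (m * k + 1)) = esum w mod int (m * k + 1)"
    using cnt_esum[of m k w] by (simp add: cong_def of_nat_mod)
  then have "cnt (m * k) w mod (m * k + 1) = nat (esum w mod int (m * k + 1))" by linarith
  then show ?thesis
    using braid_rel.trans[OF word_rel[OF n v] rep_mod[OF n]] by metis
qed


lemma quot_carrier: "carrier (braid_quot_group n m p) = (\<lambda>a. {w. braid_rel n m p a w}) ` {w. valid_bword n w}"
  by (auto simp: braid_quot_group_def quotient_def Image_def)

lemma quot_mult:
  assumes "valid_bword n a" "valid_bword n b"
  shows "monoid.mult (braid_quot_group n m p) {w. braid_rel n m p a w} {w. braid_rel n m p b w}
         = {w. braid_rel n m p (a @ b) w}"
proof -
  have "braid_rel n m p (a @ b) w" if "braid_rel n m p a a'" "braid_rel n m p b b'" "braid_rel n m p (a' @ b') w"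
    for a' b' w using rel_app[OF that(1,2)] that(3) by (rule braid_rel.trans)
  moreover have "braid_rel n m p a a" "braid_rel n m p b b" using assms by (auto intro: braid_rel.refl)
  ultimately show ?thesis by (auto simp: braid_quot_group_def)
qed

lemma cls_eq:
  assumes r: "braid_rel n m p a b"
  shows "{w. braid_rel n m p a w} = {w. braid_rel n m p b w}"
proof -
  have 1: "braid_rel n m p a w \<Longrightarrow> braid_rel n m p b w" for w by (rule braid_rel.trans[OF braid_rel.sym[OF r]])
  have 2: "braid_rel n m p b w \<Longrightarrow> braid_rel n m p a w" for w by (rule braid_rel.trans[OF r])
  have "braid_rel n m p a w = braid_rel n m p b w" for w using 1 2 by blast
  then show ?thesis by simp
qed

definition hmap :: "nat \<Rightarrow> bword set \<Rightarrow> int" where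
  "hmap P U = esum (SOME w. w \<in> U) mod int P"

theorem proposition3p1:
  fixes n m k :: nat
  assumes "n \<ge> 3" and "m \<ge> 2" and "k \<ge> 1"
  shows "finite (carrier (braid_quot_group n m (m * k + 1))) \<and>
         braid_quot_group n m (m * k + 1) \<cong> integer_mod_group (m * k + 1)"
proof -
  define P where "P = m * k + 1"
  let ?R = "braid_rel n m P"
  let ?G = "braid_quot_group n m P" and ?H = "integer_mod_group P"
  let ?cls = "\<lambda>a. {w. ?R a w}"
  have n2: "2 \<le> n" using assms by simp
  have P0: "P > 0" "P \<noteq> 0" by (auto simp: P_def)
  define h where "h = hmap P"
  have carrG: "carrier ?G = ?cls ` {w. valid_bword n w}" by (rule quot_carrier)
  have carrH: "carrier ?H = {0..<int P}" using P0 by (simp add: carrier_integer_mod_group)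
  have hcls: "h (?cls a) = esum a mod int P" if "valid_bword n a" for a
  proof -
    have "\<exists>w. w \<in> ?cls a" using that by (auto intro: braid_rel.refl)
    then have "(SOME w. w \<in> ?cls a) \<in> ?cls a" by (rule someI_ex)
    then have "?R a (SOME w. w \<in> ?cls a)" by simp
    from esum_cong[OF this] show ?thesis by (simp add: h_def hmap_def cong_def)
  qed
  have hin: "h U \<in> carrier ?H" if "U \<in> carrier ?G" for U
    using that P0 by (auto simp: carrG carrH hcls)
  have hmult: "h (monoid.mult ?G U Y) = monoid.mult ?H (h U) (h Y)"
    if UY: "U \<in> carrier ?G" "Y \<in> carrier ?G" for U Y
  proof -
    obtain a b where ab: "valid_bword n a" "valid_bword n b" "U = ?cls a" "Y = ?cls b"
      using UY carrG by auto
    show ?thesis using ab by (simp add: quot_mult hcls mod_add_eq)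
  qed
  have hom: "h \<in> hom ?G ?H" unfolding hom_def using hin hmult by auto
  have canon: "?R a (replicate (nat (esum a mod int P)) (1, False))" if "valid_bword n a" for a
    using canonical[OF n2 that] by (simp add: P_def)
  have inj: "inj_on h (carrier ?G)"
  proof (rule inj_onI)
    fix U Y assume "U \<in> carrier ?G" "Y \<in> carrier ?G" and e: "h U = h Y"
    then obtain a b where ab: "valid_bword n a" "valid_bword n b" "U = ?cls a" "Y = ?cls b"
      using carrG by auto
    have ee: "esum a mod int P = esum b mod int P" using e ab hcls by simp
    have "?R a b" using canon[OF ab(1)] braid_rel.sym[OF canon[OF ab(2)]]
      unfolding ee by (rule braid_rel.trans)
    from cls_eq[OF this] show "U = Y" using ab by simp
  qed
  have surj: "h ` carrier ?G = carrier ?H"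
  proof
    show "h ` carrier ?G \<subseteq> carrier ?H" using hin by auto
    show "carrier ?H \<subseteq> h ` carrier ?G"
    proof
      fix y assume "y \<in> carrier ?H"
      then have y: "0 \<le> y" "y < int P" using carrH by auto
      have v: "valid_bword n (replicate (nat y) (1, False))" using n2 by auto
      have "h (?cls (replicate (nat y) (1, False))) = esum (replicate (nat y) (1, False)) mod int P"
        by (rule hcls[OF v])
      also have "\<dots> = y" using y by simp
      finally have hy: "h (?cls (replicate (nat y) (1, False))) = y" .
      have ic: "?cls (replicate (nat y) (1, False)) \<in> carrier ?G" using v carrG by auto
      show "y \<in> h ` carrier ?G" by (rule image_eqI[where f=h, OF hy[symmetric] ic])
    qed
  qed
  have bij: "bij_betw h (carrier ?G) (carrier ?H)" using inj surj by (simp add: bij_betw_def)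
  have "h \<in> iso ?G ?H" using hom bij by (simp add: iso_def)
  then have "?G \<cong> ?H" by (auto simp: is_iso_def)
  moreover have "finite (carrier ?G)"
  proof -
    have "finite (carrier ?H)" unfolding carrH by simp
    then show ?thesis using bij_betw_finite[OF bij] by blast
  qed
  ultimately show ?thesis unfolding P_def by blast
qed

end
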